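(* Let $G$ be a TDLC-group, $H$ a closed subgroup of $G$, and $M$ a finitely generated projective discrete $\mathbb{Q}[G]$-module with filling norm $\|\cdot\|_M$. Regard $M$ as a discrete $\mathbb{Q}[H]$-module by restriction, and suppose $N$ is a finitely generated direct summand of $M$ in the category of discrete $\mathbb{Q}[H]$-modules. Then $N$ is undistorted with respect to $\|\cdot\|_M$: the restriction of $\|\cdot\|_M$ to $N$ is equivalent to the filling norm of $N$ as a $\mathbb{Q}[H]$-module.
   Context: A TDLC-group is a totally disconnected locally compact Hausdorff topological group. For a TDLC-group $G$, a discrete $\mathbb{Q}[G]$-module is a left $\mathbb{Q}[G]$-module in which every element has open stabilizer; restriction to a closed subgroup $H$ sends discrete $\mathbb{Q}[G]$-modules to discrete $\mathbb{Q}[H]$-modules and projectives to projectives. A $G$-set $\Omega$ is proper if all point stabilizers are compact open; $\mathbb{Q}[\Omega]$ is then a proper permutation module, finitely generated iff $\Omega/G$ is finite, with $\ell_1$-norm $\|\sum a_\omega\omega\|_1=\sum|a_\omega|$. For a finitely generated discrete module $M$ and a surjection $\partial:\mathbb{Q}[\Omega]\twoheadrightarrow M$ from a finitely generated proper permutation module, the filling pseudo-norm is $\|m\|_\partial=\inf\{\|x\|_1:\partial(x)=m\}$; it is unique up to equivalence (each bounded by a constant times the other) and is a norm when $M$ is projective. *)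

theory Defs
  imports "HOL-Analysis.Analysis"
begin

definition tdlc_group :: "'g::{group_add, t2_space} itself \<Rightarrow> bool" where
  "tdlc_group (_ :: 'g itself) \<longleftrightarrow>
     continuous_on UNIV (\<lambda>p :: 'g \<times> 'g. fst p + snd p) \<and>
     continuous_on UNIV (uminus :: 'g \<Rightarrow> 'g) \<and>
     locally_compact_space (euclidean :: 'g topology) \<and>
     (\<forall>x :: 'g. connected_component_set UNIV x = {x})"

definition closed_subgroup :: "'g::{group_add, topological_space} set \<Rightarrow> bool" where
  "closed_subgroup H \<longleftrightarrow> closed H \<and> 0 \<in> H \<and> (\<forall>x\<in>H. \<forall>y\<in>H. x - y \<in> H)"

record ('g, 'm) gmod =
  gcarrier :: "'m set"
  gadd :: "'m \<Rightarrow> 'm \<Rightarrow> 'm"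
  gzero :: 'm
  gsmul :: "rat \<Rightarrow> 'm \<Rightarrow> 'm"
  gact :: "'g \<Rightarrow> 'm \<Rightarrow> 'm"

definition qvs :: "('g, 'm) gmod \<Rightarrow> bool" where
  "qvs M \<longleftrightarrow>
    gzero M \<in> gcarrier M \<and>
    (\<forall>x\<in>gcarrier M. \<forall>y\<in>gcarrier M. gadd M x y \<in> gcarrier M) \<and>
    (\<forall>a. \<forall>x\<in>gcarrier M. gsmul M a x \<in> gcarrier M) \<and>
    (\<forall>x\<in>gcarrier M. \<forall>y\<in>gcarrier M. \<forall>z\<in>gcarrier M.
        gadd M (gadd M x y) z = gadd M x (gadd M y z)) \<and>
    (\<forall>x\<in>gcarrier M. \<forall>y\<in>gcarrier M. gadd M x y = gadd M y x) \<and>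
    (\<forall>x\<in>gcarrier M. gadd M (gzero M) x = x) \<and>
    (\<forall>x\<in>gcarrier M. \<exists>y\<in>gcarrier M. gadd M x y = gzero M) \<and>
    (\<forall>a b. \<forall>x\<in>gcarrier M. gsmul M (a + b) x = gadd M (gsmul M a x) (gsmul M b x)) \<and>
    (\<forall>a. \<forall>x\<in>gcarrier M. \<forall>y\<in>gcarrier M.
        gsmul M a (gadd M x y) = gadd M (gsmul M a x) (gsmul M a y)) \<and>
    (\<forall>a b. \<forall>x\<in>gcarrier M. gsmul M (a * b) x = gsmul M a (gsmul M b x)) \<and>
    (\<forall>x\<in>gcarrier M. gsmul M 1 x = x)"

definition dmod :: "'g::{group_add, topological_space} set \<Rightarrow> ('g, 'm) gmod \<Rightarrow> bool" where
  "dmod S M \<longleftrightarrow> qvs M \<and>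
    (\<forall>g\<in>S. \<forall>x\<in>gcarrier M. gact M g x \<in> gcarrier M) \<and>
    (\<forall>x\<in>gcarrier M. gact M 0 x = x) \<and>
    (\<forall>g\<in>S. \<forall>h\<in>S. \<forall>x\<in>gcarrier M. gact M (g + h) x = gact M g (gact M h x)) \<and>
    (\<forall>g\<in>S. \<forall>x\<in>gcarrier M. \<forall>y\<in>gcarrier M.
        gact M g (gadd M x y) = gadd M (gact M g x) (gact M g y)) \<and>
    (\<forall>g\<in>S. \<forall>a. \<forall>x\<in>gcarrier M. gact M g (gsmul M a x) = gsmul M a (gact M g x)) \<and>
    (\<forall>x\<in>gcarrier M. openin (top_of_set S) {g\<in>S. gact M g x = x})"

definition dhom :: "'g set \<Rightarrow> ('g, 'm) gmod \<Rightarrow> ('g, 'n) gmod \<Rightarrow> ('m \<Rightarrow> 'n) \<Rightarrow> bool" where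
  "dhom S M N f \<longleftrightarrow>
    (\<forall>x\<in>gcarrier M. f x \<in> gcarrier N) \<and>
    (\<forall>x\<in>gcarrier M. \<forall>y\<in>gcarrier M. f (gadd M x y) = gadd N (f x) (f y)) \<and>
    (\<forall>a. \<forall>x\<in>gcarrier M. f (gsmul M a x) = gsmul N a (f x)) \<and>
    (\<forall>g\<in>S. \<forall>x\<in>gcarrier M. f (gact M g x) = gact N g (f x))"

definition dsubmod :: "'g set \<Rightarrow> ('g, 'm) gmod \<Rightarrow> 'm set \<Rightarrow> bool" where
  "dsubmod S M W \<longleftrightarrow> W \<subseteq> gcarrier M \<and> gzero M \<in> W \<and>
    (\<forall>x\<in>W. \<forall>y\<in>W. gadd M x y \<in> W) \<and> (\<forall>a. \<forall>x\<in>W. gsmul M a x \<in> W) \<and>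
    (\<forall>g\<in>S. \<forall>x\<in>W. gact M g x \<in> W)"

definition dfg :: "'g set \<Rightarrow> ('g, 'm) gmod \<Rightarrow> bool" where
  "dfg S M \<longleftrightarrow> (\<exists>F. finite F \<and> F \<subseteq> gcarrier M \<and>
      gcarrier M = \<Inter>{W. dsubmod S M W \<and> F \<subseteq> W})"

text \<open>Because HOL cannot quantify over types inside a formula, the test
  modules are those whose carriers live in the fixed (sufficiently large) type
  (pairs of a group element and a natural number, to rat).\<close>
definition dproj :: "'g::{group_add, topological_space} set \<Rightarrow> ('g, 'm) gmod \<Rightarrow> bool" where
  "dproj S M \<longleftrightarrow>
    (\<forall>(A :: ('g, 'g \<times> nat \<Rightarrow> rat) gmod) (B :: ('g, 'g \<times> nat \<Rightarrow> rat) gmod) p f.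
       dmod S A \<and> dmod S B \<and> dhom S A B p \<and> p ` gcarrier A = gcarrier B \<and> dhom S M B f
       \<longrightarrow> (\<exists>f'. dhom S M A f' \<and> (\<forall>x\<in>gcarrier M. p (f' x) = f x)))"

definition proper_gset :: "'g::{group_add, topological_space} set \<Rightarrow> 'w set \<Rightarrow> ('g \<Rightarrow> 'w \<Rightarrow> 'w) \<Rightarrow> bool" where
  "proper_gset S \<Omega> \<alpha> \<longleftrightarrow>
    (\<forall>g\<in>S. \<forall>w\<in>\<Omega>. \<alpha> g w \<in> \<Omega>) \<and>
    (\<forall>w\<in>\<Omega>. \<alpha> 0 w = w) \<and>
    (\<forall>g\<in>S. \<forall>h\<in>S. \<forall>w\<in>\<Omega>. \<alpha> (g + h) w = \<alpha> g (\<alpha> h w)) \<and>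
    (\<forall>w\<in>\<Omega>. compact {g\<in>S. \<alpha> g w = w} \<and> openin (top_of_set S) {g\<in>S. \<alpha> g w = w})"

definition finite_orbits :: "'g set \<Rightarrow> 'w set \<Rightarrow> ('g \<Rightarrow> 'w \<Rightarrow> 'w) \<Rightarrow> bool" where
  "finite_orbits S \<Omega> \<alpha> \<longleftrightarrow>
    (\<exists>F. finite F \<and> F \<subseteq> \<Omega> \<and> \<Omega> = {\<alpha> g w | g w. g \<in> S \<and> w \<in> F})"

definition permmod :: "'w set \<Rightarrow> ('g::group_add \<Rightarrow> 'w \<Rightarrow> 'w) \<Rightarrow> ('g, 'w \<Rightarrow> rat) gmod" where
  "permmod \<Omega> \<alpha> =
    \<lparr> gcarrier = {x. finite {w. x w \<noteq> 0} \<and> {w. x w \<noteq> 0} \<subseteq> \<Omega>},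
      gadd = (\<lambda>x y w. x w + y w),
      gzero = (\<lambda>w. 0),
      gsmul = (\<lambda>a x w. a * x w),
      gact = (\<lambda>g x w. if w \<in> \<Omega> then x (\<alpha> (- g) w) else 0) \<rparr>"

definition l1norm :: "('w \<Rightarrow> rat) \<Rightarrow> real" where
  "l1norm x = real_of_rat (\<Sum>w\<in>{w. x w \<noteq> 0}. \<bar>x w\<bar>)"

definition filling_pres ::
  "'g::{group_add, topological_space} set \<Rightarrow> 'w set \<Rightarrow> ('g \<Rightarrow> 'w \<Rightarrow> 'w) \<Rightarrow> ('g, 'm) gmod
     \<Rightarrow> (('w \<Rightarrow> rat) \<Rightarrow> 'm) \<Rightarrow> bool" where
  "filling_pres S \<Omega> \<alpha> M d \<longleftrightarrow>
    proper_gset S \<Omega> \<alpha> \<and> finite_orbits S \<Omega> \<alpha> \<and>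
    dhom S (permmod \<Omega> \<alpha>) M d \<and> d ` gcarrier (permmod \<Omega> \<alpha>) = gcarrier M"

definition filling_norm :: "'w set \<Rightarrow> ('g::group_add \<Rightarrow> 'w \<Rightarrow> 'w) \<Rightarrow> (('w \<Rightarrow> rat) \<Rightarrow> 'm) \<Rightarrow> 'm \<Rightarrow> real" where
  "filling_norm \<Omega> \<alpha> d m =
    Inf {l1norm x | x. x \<in> gcarrier (permmod \<Omega> \<alpha> :: ('g, 'w \<Rightarrow> rat) gmod) \<and> d x = m}"

end

theory Submission
  imports Defs
begin


section \<open>Q-vector space basics\<close>

context fixes M :: "('g,'m) gmod" assumes Q: "qvs M" begin

lemmas QQ = Q[unfolded qvs_def]

lemma q_zero[simp,intro]: "gzero M \<in> gcarrier M" using QQ[THEN conjunct1] by blast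
lemma q_add[simp,intro]: "x \<in> gcarrier M \<Longrightarrow> y \<in> gcarrier M \<Longrightarrow> gadd M x y \<in> gcarrier M"
  using QQ[THEN conjunct2, THEN conjunct1] by blast
lemma q_smul[simp,intro]: "x \<in> gcarrier M \<Longrightarrow> gsmul M a x \<in> gcarrier M"
  using QQ[THEN conjunct2, THEN conjunct2, THEN conjunct1] by blast
lemma q_assoc: "x \<in> gcarrier M \<Longrightarrow> y \<in> gcarrier M \<Longrightarrow> z \<in> gcarrier M \<Longrightarrow>
   gadd M (gadd M x y) z = gadd M x (gadd M y z)"
  using QQ[THEN conjunct2, THEN conjunct2, THEN conjunct2, THEN conjunct1] by blast
lemma q_comm: "x \<in> gcarrier M \<Longrightarrow> y \<in> gcarrier M \<Longrightarrow> gadd M x y = gadd M y x"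
  using QQ[THEN conjunct2, THEN conjunct2, THEN conjunct2, THEN conjunct2, THEN conjunct1] by blast
lemma q_lzero[simp]: "x \<in> gcarrier M \<Longrightarrow> gadd M (gzero M) x = x"
  using QQ[THEN conjunct2, THEN conjunct2, THEN conjunct2, THEN conjunct2, THEN conjunct2, THEN conjunct1] by blast
lemma q_rzero[simp]: "x \<in> gcarrier M \<Longrightarrow> gadd M x (gzero M) = x"
proof - assume "x \<in> gcarrier M" thus ?thesis using q_comm[of x "gzero M"] by simp qed
lemma q_inv: "x \<in> gcarrier M \<Longrightarrow> \<exists>y\<in>gcarrier M. gadd M x y = gzero M"
  using QQ[THEN conjunct2, THEN conjunct2, THEN conjunct2, THEN conjunct2, THEN conjunct2, THEN conjunct2, THEN conjunct1] by blast
lemma q_sdistr: "x \<in> gcarrier M \<Longrightarrow> gsmul M (a + b) x = gadd M (gsmul M a x) (gsmul M b x)"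
  using QQ[THEN conjunct2, THEN conjunct2, THEN conjunct2, THEN conjunct2, THEN conjunct2, THEN conjunct2, THEN conjunct2, THEN conjunct1] by blast
lemma q_vdistr: "x \<in> gcarrier M \<Longrightarrow> y \<in> gcarrier M \<Longrightarrow>
   gsmul M a (gadd M x y) = gadd M (gsmul M a x) (gsmul M a y)"
  using QQ[THEN conjunct2, THEN conjunct2, THEN conjunct2, THEN conjunct2, THEN conjunct2, THEN conjunct2, THEN conjunct2, THEN conjunct2, THEN conjunct1] by blast
lemma q_smult: "x \<in> gcarrier M \<Longrightarrow> gsmul M (a * b) x = gsmul M a (gsmul M b x)"
  using QQ[THEN conjunct2, THEN conjunct2, THEN conjunct2, THEN conjunct2, THEN conjunct2, THEN conjunct2, THEN conjunct2, THEN conjunct2, THEN conjunct2, THEN conjunct1] by blast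
lemma q_one[simp]: "x \<in> gcarrier M \<Longrightarrow> gsmul M 1 x = x"
  using QQ[THEN conjunct2, THEN conjunct2, THEN conjunct2, THEN conjunct2, THEN conjunct2, THEN conjunct2, THEN conjunct2, THEN conjunct2, THEN conjunct2, THEN conjunct2] by blast

lemma q_lcomm: "x \<in> gcarrier M \<Longrightarrow> y \<in> gcarrier M \<Longrightarrow> z \<in> gcarrier M \<Longrightarrow>
   gadd M x (gadd M y z) = gadd M y (gadd M x z)"
proof - assume a: "x \<in> gcarrier M" "y \<in> gcarrier M" "z \<in> gcarrier M"
  have "gadd M x (gadd M y z) = gadd M (gadd M x y) z" using a q_assoc by simp
  also have "\<dots> = gadd M (gadd M y x) z" using a q_comm[of x y] by simp
  also have "\<dots> = gadd M y (gadd M x z)" using a q_assoc by simp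
  finally show ?thesis . qed

lemmas q_ac = q_assoc q_comm q_lcomm

lemma q_cancel:
  assumes "x \<in> gcarrier M" "y \<in> gcarrier M" "z \<in> gcarrier M" "gadd M x z = gadd M y z"
  shows "x = y"
proof -
  obtain u where u: "u \<in> gcarrier M" "gadd M z u = gzero M" using q_inv assms(3) by blast
  have "x = gadd M (gadd M x z) u" using assms u q_assoc[of x z u] by simp
  also have "\<dots> = gadd M (gadd M y z) u" using assms by simp
  also have "\<dots> = y" using assms u q_assoc[of y z u] by simp
  finally show ?thesis .
qed

lemma q_idem_zero: "x \<in> gcarrier M \<Longrightarrow> gadd M x x = x \<Longrightarrow> x = gzero M"
  using q_cancel[of x "gzero M" x] by simp

lemma q_smul0[simp]: "x \<in> gcarrier M \<Longrightarrow> gsmul M 0 x = gzero M"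
  by (rule q_idem_zero) (use q_sdistr[of x 0 0] in auto)

lemma q_smul_zero[simp]: "gsmul M a (gzero M) = gzero M"
  by (rule q_idem_zero) (use q_vdistr[of "gzero M" "gzero M" a] in auto)

lemma q_neg: "x \<in> gcarrier M \<Longrightarrow> gadd M x (gsmul M (-1) x) = gzero M"
  using q_sdistr[of x 1 "-1"] by simp

lemma q_neg_cancel: "x \<in> gcarrier M \<Longrightarrow> y \<in> gcarrier M \<Longrightarrow> gadd M (gadd M x (gsmul M (-1) y)) y = x"
proof - assume a: "x \<in> gcarrier M" "y \<in> gcarrier M"
  have "gadd M (gadd M x (gsmul M (-1) y)) y = gadd M x (gadd M (gsmul M (-1) y) y)" using a q_assoc by simp
  also have "\<dots> = x" using a q_neg[of y] q_comm[of y "gsmul M (-1) y"] by simp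
  finally show ?thesis . qed

end


section \<open>Finitely supported functions and l1 norm\<close>

definition supp :: "('w \<Rightarrow> rat) \<Rightarrow> 'w set" where "supp x = {w. x w \<noteq> 0}"
definition fs :: "'w set \<Rightarrow> ('w \<Rightarrow> rat) set" where
  "fs A = {x. finite (supp x) \<and> supp x \<subseteq> A}"
definition dl :: "'w \<Rightarrow> 'w \<Rightarrow> rat" where "dl w = (\<lambda>u. if u = w then 1 else 0)"
definition pact :: "'w set \<Rightarrow> ('g::group_add \<Rightarrow> 'w \<Rightarrow> 'w) \<Rightarrow> 'g \<Rightarrow> ('w \<Rightarrow> rat) \<Rightarrow> 'w \<Rightarrow> rat" where
  "pact \<Omega> \<alpha> g x = (\<lambda>w. if w \<in> \<Omega> then x (\<alpha> (- g) w) else 0)"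

lemma permmod_simps[simp]:
  "gcarrier (permmod \<Omega> \<alpha>) = fs \<Omega>"
  "gadd (permmod \<Omega> \<alpha>) = (\<lambda>x y w. x w + y w)"
  "gzero (permmod \<Omega> \<alpha>) = (\<lambda>w. 0)"
  "gsmul (permmod \<Omega> \<alpha>) = (\<lambda>a x w. a * x w)"
  "gact (permmod \<Omega> \<alpha>) = pact \<Omega> \<alpha>"
  by (auto simp: permmod_def fs_def supp_def pact_def fun_eq_iff)

lemma fs_iff: "x \<in> fs A \<longleftrightarrow> finite {w. x w \<noteq> 0} \<and> (\<forall>w. x w \<noteq> 0 \<longrightarrow> w \<in> A)"
  by (auto simp: fs_def supp_def)

lemma fs_zero[simp,intro]: "(\<lambda>w. 0) \<in> fs A" by (simp add: fs_iff)

lemma fs_add[intro]: "x \<in> fs A \<Longrightarrow> y \<in> fs A \<Longrightarrow> (\<lambda>w. x w + y w) \<in> fs A"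
proof -
  assume a: "x \<in> fs A" "y \<in> fs A"
  have "{w. x w + y w \<noteq> 0} \<subseteq> {w. x w \<noteq> 0} \<union> {w. y w \<noteq> 0}" by auto
  hence "finite {w. x w + y w \<noteq> 0}" using a by (auto simp: fs_iff intro: finite_subset)
  thus ?thesis using a unfolding fs_iff by (metis add.left_neutral)
qed

lemma fs_smul[intro]: "x \<in> fs A \<Longrightarrow> (\<lambda>w. c * x w) \<in> fs A"
proof -
  assume a: "x \<in> fs A"
  have "{w. c * x w \<noteq> 0} \<subseteq> {w. x w \<noteq> 0}" by auto
  thus ?thesis using a by (auto simp: fs_iff intro: finite_subset)
qed

lemma fs_upd[intro]: "x \<in> fs A \<Longrightarrow> x(w := 0) \<in> fs A"
proof -
  assume a: "x \<in> fs A"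
  have "{u. (x(w:=0)) u \<noteq> 0} \<subseteq> {w. x w \<noteq> 0}" by auto
  thus ?thesis using a by (auto simp: fs_iff intro: finite_subset)
qed

lemma fs_dl[intro]: "w \<in> A \<Longrightarrow> dl w \<in> fs A"
  by (auto simp: fs_iff dl_def)

lemma fs_restr[intro]: "x \<in> fs A \<Longrightarrow> (\<lambda>u. if u \<in> B then x u else 0) \<in> fs (A \<inter> B)"
proof -
  assume a: "x \<in> fs A"
  have "{u. (if u \<in> B then x u else 0) \<noteq> 0} \<subseteq> {w. x w \<noteq> 0}" by auto
  thus ?thesis using a by (auto simp: fs_iff intro: finite_subset split: if_splits)
qed

lemma fs_mono: "x \<in> fs A \<Longrightarrow> A \<subseteq> B \<Longrightarrow> x \<in> fs B" by (auto simp: fs_def)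

lemma l1norm_eq: "finite A \<Longrightarrow> supp x \<subseteq> A \<Longrightarrow> l1norm x = real_of_rat (\<Sum>w\<in>A. \<bar>x w\<bar>)"
  unfolding l1norm_def
  by (rule arg_cong[where f=real_of_rat], rule sum.mono_neutral_left) (auto simp: supp_def)

lemma l1_nonneg[simp]: "0 \<le> l1norm x"
  unfolding l1norm_def by (simp add: sum_nonneg zero_le_of_rat_iff)

lemma l1_zero[simp]: "l1norm (\<lambda>w. 0) = 0"
  unfolding l1norm_def by simp

lemma l1_add: "finite (supp x) \<Longrightarrow> finite (supp y) \<Longrightarrow> l1norm (\<lambda>w. x w + y w) \<le> l1norm x + l1norm y"
proof -
  assume a: "finite (supp x)" "finite (supp y)"
  let ?A = "supp x \<union> supp y"
  have f: "finite ?A" using a by simp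
  have "l1norm (\<lambda>w. x w + y w) = real_of_rat (\<Sum>w\<in>?A. \<bar>x w + y w\<bar>)"
    by (rule l1norm_eq[OF f]) (auto simp: supp_def)
  also have "\<dots> \<le> real_of_rat (\<Sum>w\<in>?A. \<bar>x w\<bar> + \<bar>y w\<bar>)"
    by (simp only: of_rat_less_eq) (rule sum_mono, rule abs_triangle_ineq)
  also have "\<dots> = real_of_rat (\<Sum>w\<in>?A. \<bar>x w\<bar>) + real_of_rat (\<Sum>w\<in>?A. \<bar>y w\<bar>)"
    by (simp add: sum.distrib of_rat_add)
  also have "\<dots> = l1norm x + l1norm y"
    using l1norm_eq[OF f, of x] l1norm_eq[OF f, of y] by auto
  finally show ?thesis .
qed

lemma l1_smul: "finite (supp x) \<Longrightarrow> l1norm (\<lambda>w. c * x w) = real_of_rat \<bar>c\<bar> * l1norm x"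
proof -
  assume a: "finite (supp x)"
  have "l1norm (\<lambda>w. c * x w) = real_of_rat (\<Sum>w\<in>supp x. \<bar>c * x w\<bar>)"
    by (rule l1norm_eq[OF a]) (auto simp: supp_def)
  also have "\<dots> = real_of_rat \<bar>c\<bar> * real_of_rat (\<Sum>w\<in>supp x. \<bar>x w\<bar>)"
    by (simp only: abs_mult sum_distrib_left[symmetric] of_rat_mult)
  also have "\<dots> = real_of_rat \<bar>c\<bar> * l1norm x"
    using l1norm_eq[OF a, of x] by auto
  finally show ?thesis .
qed

lemma l1_split: "finite (supp x) \<Longrightarrow> l1norm x = l1norm (x(w := 0)) + real_of_rat \<bar>x w\<bar>"
proof -
  assume a: "finite (supp x)"
  let ?A = "insert w (supp x)"
  have f: "finite ?A" using a by simp
  have "l1norm x = real_of_rat (\<Sum>u\<in>?A. \<bar>x u\<bar>)" by (rule l1norm_eq[OF f]) auto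
  also have "(\<Sum>u\<in>?A. \<bar>x u\<bar>) = \<bar>x w\<bar> + (\<Sum>u\<in>supp x - {w}. \<bar>x u\<bar>)"
    using a by (rule sum.insert_remove)
  also have "(\<Sum>u\<in>supp x - {w}. \<bar>x u\<bar>) = (\<Sum>u\<in>supp x - {w}. \<bar>(x(w:=0)) u\<bar>)"
    by (rule sum.cong) auto
  also have "\<dots> = \<bar>(x(w:=0)) w\<bar> + (\<Sum>u\<in>supp x - {w}. \<bar>(x(w:=0)) u\<bar>)" by simp
  also have "\<dots> = (\<Sum>u\<in>?A. \<bar>(x(w:=0)) u\<bar>)"
    using a by (rule sum.insert_remove[symmetric])
  also have "real_of_rat (\<bar>x w\<bar> + (\<Sum>u\<in>?A. \<bar>(x(w:=0)) u\<bar>)) = real_of_rat \<bar>x w\<bar> + l1norm (x(w:=0))"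
  proof -
    have "supp (x(w:=0)) \<subseteq> ?A" by (auto simp: supp_def)
    from l1norm_eq[OF f this] show ?thesis by (simp add: of_rat_add)
  qed
  finally show ?thesis by simp
qed

lemma l1_dl[simp]: "l1norm (dl w) = 1"
proof -
  have "l1norm (dl w) = real_of_rat (\<Sum>u\<in>{w}. \<bar>dl w u\<bar>)"
    by (rule l1norm_eq) (auto simp: supp_def dl_def)
  thus ?thesis by (simp add: dl_def)
qed

lemma l1_restr: "finite (supp x) \<Longrightarrow> l1norm (\<lambda>u. if u \<in> B then x u else 0) \<le> l1norm x"
proof -
  assume a: "finite (supp x)"
  have "l1norm (\<lambda>u. if u \<in> B then x u else 0) = real_of_rat (\<Sum>u\<in>supp x. \<bar>if u \<in> B then x u else 0\<bar>)"
    by (rule l1norm_eq[OF a]) (auto simp: supp_def)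
  also have "\<dots> \<le> real_of_rat (\<Sum>u\<in>supp x. \<bar>x u\<bar>)"
    by (simp only: of_rat_less_eq) (rule sum_mono, auto)
  also have "\<dots> = l1norm x" using l1norm_eq[OF a, of x] by auto
  finally show ?thesis .
qed

lemma fs_finite: "x \<in> fs A \<Longrightarrow> finite (supp x)" by (simp add: fs_def)

section \<open>Actions\<close>

definition actok :: "'g::group_add set \<Rightarrow> 'w set \<Rightarrow> ('g \<Rightarrow> 'w \<Rightarrow> 'w) \<Rightarrow> bool" where
  "actok S \<Omega> \<alpha> \<longleftrightarrow> (\<forall>g\<in>S. - g \<in> S) \<and> (\<forall>g\<in>S. \<forall>w\<in>\<Omega>. \<alpha> g w \<in> \<Omega>) \<and>
     (\<forall>w\<in>\<Omega>. \<alpha> 0 w = w) \<and> (\<forall>g\<in>S. \<forall>h\<in>S. \<forall>w\<in>\<Omega>. \<alpha> (g + h) w = \<alpha> g (\<alpha> h w))"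

lemma actok_proper: "proper_gset S \<Omega> \<alpha> \<Longrightarrow> (\<forall>g\<in>S. - g \<in> S) \<Longrightarrow> actok S \<Omega> \<alpha>"
  unfolding actok_def proper_gset_def by blast

context fixes S \<Omega> \<alpha> assumes A: "actok S \<Omega> \<alpha>" begin

lemma ak_neg: "g \<in> S \<Longrightarrow> - g \<in> S" using A unfolding actok_def by blast
lemma ak_in: "g \<in> S \<Longrightarrow> w \<in> \<Omega> \<Longrightarrow> \<alpha> g w \<in> \<Omega>" using A unfolding actok_def by blast
lemma ak_inv1: "g \<in> S \<Longrightarrow> w \<in> \<Omega> \<Longrightarrow> \<alpha> (- g) (\<alpha> g w) = w"
proof -
  assume a: "g \<in> S" "w \<in> \<Omega>"
  have "\<alpha> (- g + g) w = \<alpha> (- g) (\<alpha> g w)" using A a ak_neg unfolding actok_def by blast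
  moreover have "\<alpha> 0 w = w" using A a unfolding actok_def by blast
  ultimately show ?thesis by simp
qed
lemma ak_inv2: "g \<in> S \<Longrightarrow> w \<in> \<Omega> \<Longrightarrow> \<alpha> g (\<alpha> (- g) w) = w"
  using ak_inv1[of "- g" w] ak_neg by simp

lemma pact_dl: "g \<in> S \<Longrightarrow> w \<in> \<Omega> \<Longrightarrow> pact \<Omega> \<alpha> g (dl w) = dl (\<alpha> g w)"
  unfolding pact_def dl_def fun_eq_iff
  using ak_inv1 ak_inv2 ak_in ak_neg by metis

lemma supp_pact: "g \<in> S \<Longrightarrow> x \<in> fs \<Omega> \<Longrightarrow> supp (pact \<Omega> \<alpha> g x) = \<alpha> g ` supp x"
proof (intro set_eqI iffI)
  fix u assume g: "g \<in> S" and x: "x \<in> fs \<Omega>" and u: "u \<in> supp (pact \<Omega> \<alpha> g x)"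
  hence "u \<in> \<Omega>" "x (\<alpha> (- g) u) \<noteq> 0" by (auto simp: supp_def pact_def split: if_splits)
  thus "u \<in> \<alpha> g ` supp x" using ak_inv2[OF g] by (force simp: supp_def)
next
  fix u assume g: "g \<in> S" and x: "x \<in> fs \<Omega>" and u: "u \<in> \<alpha> g ` supp x"
  then obtain w where w: "w \<in> supp x" "u = \<alpha> g w" by blast
  have "w \<in> \<Omega>" using w x by (auto simp: fs_def)
  thus "u \<in> supp (pact \<Omega> \<alpha> g x)" using w ak_inv1[OF g] ak_in[OF g]
    by (auto simp: supp_def pact_def)
qed

lemma fs_pact: "g \<in> S \<Longrightarrow> x \<in> fs \<Omega> \<Longrightarrow> pact \<Omega> \<alpha> g x \<in> fs \<Omega>"
  using supp_pact ak_in unfolding fs_def by fastforce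

lemma l1_pact: "g \<in> S \<Longrightarrow> x \<in> fs \<Omega> \<Longrightarrow> l1norm (pact \<Omega> \<alpha> g x) = l1norm x"
proof -
  assume g: "g \<in> S" and x: "x \<in> fs \<Omega>"
  have f: "finite (supp x)" using x by (simp add: fs_def)
  have inj: "inj_on (\<alpha> g) (supp x)"
    by (rule inj_on_inverseI[where g="\<alpha> (- g)"]) (use ak_inv1[OF g] x in \<open>auto simp: fs_def\<close>)
  have "l1norm (pact \<Omega> \<alpha> g x) = real_of_rat (\<Sum>u\<in>\<alpha> g ` supp x. \<bar>pact \<Omega> \<alpha> g x u\<bar>)"
    by (rule l1norm_eq) (use f supp_pact[OF g x] in auto)
  also have "(\<Sum>u\<in>\<alpha> g ` supp x. \<bar>pact \<Omega> \<alpha> g x u\<bar>) = (\<Sum>w\<in>supp x. \<bar>pact \<Omega> \<alpha> g x (\<alpha> g w)\<bar>)"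
    by (rule sum.reindex[OF inj, unfolded comp_def])
  also have "\<dots> = (\<Sum>w\<in>supp x. \<bar>x w\<bar>)"
    by (rule sum.cong) (use x ak_in[OF g] ak_inv1[OF g] in \<open>auto simp: pact_def fs_def\<close>)
  also have "real_of_rat \<dots> = l1norm x" by (simp add: l1norm_def supp_def)
  finally show ?thesis .
qed

end


definition lin :: "'w set \<Rightarrow> ('g,'m) gmod \<Rightarrow> (('w \<Rightarrow> rat) \<Rightarrow> 'm) \<Rightarrow> bool" where
  "lin A Q T \<longleftrightarrow> (\<forall>x\<in>fs A. T x \<in> gcarrier Q) \<and>
     (\<forall>x\<in>fs A. \<forall>y\<in>fs A. T (\<lambda>w. x w + y w) = gadd Q (T x) (T y)) \<and>
     (\<forall>c. \<forall>x\<in>fs A. T (\<lambda>w. c * x w) = gsmul Q c (T x))"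

lemma lin_in: "lin A Q T \<Longrightarrow> x \<in> fs A \<Longrightarrow> T x \<in> gcarrier Q" unfolding lin_def by blast
lemma lin_add: "lin A Q T \<Longrightarrow> x \<in> fs A \<Longrightarrow> y \<in> fs A \<Longrightarrow> T (\<lambda>w. x w + y w) = gadd Q (T x) (T y)"
  unfolding lin_def by blast
lemma lin_smul: "lin A Q T \<Longrightarrow> x \<in> fs A \<Longrightarrow> T (\<lambda>w. c * x w) = gsmul Q c (T x)"
  unfolding lin_def by blast
lemma lin_zero: "qvs Q \<Longrightarrow> lin A Q T \<Longrightarrow> T (\<lambda>w. 0) = gzero Q"
  using lin_smul[of A Q T "\<lambda>w. 0" 0] lin_in[of A Q T "\<lambda>w. 0"] by simp

lemma extend_bound:
  assumes Q: "qvs Q" and T: "lin A Q T" and D: "lin B Q D"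
    and bnd: "\<forall>w\<in>A. \<exists>y\<in>fs B. D y = T (dl w) \<and> l1norm y \<le> C"
    and C: "0 \<le> C"
    and x: "x \<in> fs A"
  shows "\<exists>y\<in>fs B. D y = T x \<and> l1norm y \<le> C * l1norm x"
proof -
  have "finite F \<Longrightarrow> \<forall>x. x \<in> fs A \<and> supp x \<subseteq> F \<longrightarrow> (\<exists>y\<in>fs B. D y = T x \<and> l1norm y \<le> C * l1norm x)" for F
  proof (induction F rule: finite_induct)
    case empty
    show ?case
    proof (intro allI impI)
      fix x assume "x \<in> fs A \<and> supp x \<subseteq> {}"
      hence "x = (\<lambda>w. 0)" by (auto simp: supp_def)
      thus "\<exists>y\<in>fs B. D y = T x \<and> l1norm y \<le> C * l1norm x"
        by (intro bexI[of _ "\<lambda>w. 0"]) (auto simp: lin_zero[OF Q T] lin_zero[OF Q D])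
    qed
  next
    case (insert w F)
    show ?case
    proof (intro allI impI)
      fix x assume xa: "x \<in> fs A \<and> supp x \<subseteq> insert w F"
      let ?x' = "x(w := 0)"
      have x'A: "?x' \<in> fs A" using xa by auto
      have "supp ?x' \<subseteq> F" using xa by (auto simp: supp_def)
      then obtain y' where y': "y' \<in> fs B" "D y' = T ?x'" "l1norm y' \<le> C * l1norm ?x'"
        using insert.IH x'A by blast
      have fx: "finite (supp x)" using xa by (simp add: fs_def)
      show "\<exists>y\<in>fs B. D y = T x \<and> l1norm y \<le> C * l1norm x"
      proof (cases "x w = 0")
        case True
        hence "?x' = x" by auto
        thus ?thesis using y' by auto
      next
        case False
        hence wA: "w \<in> A" using xa by (auto simp: fs_def supp_def)
        then obtain yw where yw: "yw \<in> fs B" "D yw = T (dl w)" "l1norm yw \<le> C" using bnd by blast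
        define y where "y = (\<lambda>u. y' u + x w * yw u)"
        have yB: "y \<in> fs B" unfolding y_def using y' yw by auto
        have xeq: "x = (\<lambda>u. ?x' u + x w * dl w u)" by (auto simp: dl_def fun_eq_iff)
        have "D y = gadd Q (D y') (gsmul Q (x w) (D yw))"
          unfolding y_def using lin_add[OF D y'(1) fs_smul[OF yw(1)]] lin_smul[OF D yw(1)] by simp
        also have "\<dots> = gadd Q (T ?x') (T (\<lambda>u. x w * dl w u))"
          using y' yw lin_smul[OF T fs_dl[OF wA]] by simp
        also have "\<dots> = T (\<lambda>u. ?x' u + x w * dl w u)"
          using lin_add[OF T x'A fs_smul[OF fs_dl[OF wA]]] by simp
        also have "\<dots> = T x" using xeq by simp
        finally have Dy: "D y = T x" .
        have fy': "finite (supp y')" "finite (supp yw)" using y' yw by (auto simp: fs_def)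
        have "l1norm y \<le> l1norm y' + l1norm (\<lambda>u. x w * yw u)"
          unfolding y_def by (rule l1_add) (use fy' fs_smul[OF yw(1)] in \<open>auto simp: fs_def\<close>)
        also have "\<dots> = l1norm y' + real_of_rat \<bar>x w\<bar> * l1norm yw" using l1_smul fy' by simp
        also have "\<dots> \<le> C * l1norm ?x' + real_of_rat \<bar>x w\<bar> * C"
          by (intro add_mono y'(3) mult_left_mono yw(3)) (simp add: zero_le_of_rat_iff)
        also have "\<dots> = C * l1norm x" using l1_split[OF fx, of w] by (simp add: algebra_simps)
        finally show ?thesis using yB Dy by blast
      qed
    qed
  qed
  thus ?thesis using x by (auto simp: fs_def)
qed


lemma ball_img: "(\<forall>a\<in>f ` A. P a) = (\<forall>x\<in>A. P (f x))" by auto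
lemma bex_img: "(\<exists>a\<in>f ` A. P a) = (\<exists>x\<in>A. P (f x))" by auto

definition gtransp :: "('g,'m) gmod \<Rightarrow> ('m \<Rightarrow> 'b) \<Rightarrow> ('g,'b) gmod" where
  "gtransp M e = \<lparr> gcarrier = e ` gcarrier M,
     gadd = (\<lambda>a b. e (gadd M (inv_into (gcarrier M) e a) (inv_into (gcarrier M) e b))),
     gzero = e (gzero M),
     gsmul = (\<lambda>c a. e (gsmul M c (inv_into (gcarrier M) e a))),
     gact = (\<lambda>g a. e (gact M g (inv_into (gcarrier M) e a))) \<rparr>"

lemma transp_simps:
  "gcarrier (gtransp M e) = e ` gcarrier M"
  "gadd (gtransp M e) a b = e (gadd M (inv_into (gcarrier M) e a) (inv_into (gcarrier M) e b))"
  "gzero (gtransp M e) = e (gzero M)"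
  "gsmul (gtransp M e) c a = e (gsmul M c (inv_into (gcarrier M) e a))"
  "gact (gtransp M e) g a = e (gact M g (inv_into (gcarrier M) e a))"
  by (simp_all add: gtransp_def)

lemma dmod_qvs: "dmod S M \<Longrightarrow> qvs M" by (simp add: dmod_def)

context fixes S :: "'g::{group_add,topological_space} set" and M :: "('g,'m) gmod" and e :: "'m \<Rightarrow> 'b"
  assumes DM: "dmod S M" and inj: "inj_on e (gcarrier M)"
begin

lemma QM: "qvs M" using DM by (simp add: dmod_def)

lemma iv[simp]: "m \<in> gcarrier M \<Longrightarrow> inv_into (gcarrier M) e (e m) = m"
  using inj by (simp add: inv_into_f_f)

lemma dm_act: "g \<in> S \<Longrightarrow> x \<in> gcarrier M \<Longrightarrow> gact M g x \<in> gcarrier M"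
  using DM unfolding dmod_def by blast

lemma transp_qvs: "qvs (gtransp M e)"
proof -
  note Q = QM
  show ?thesis
  unfolding qvs_def transp_simps ball_img bex_img
  apply (intro conjI)
  using q_zero[OF Q] q_add[OF Q] q_smul[OF Q] q_assoc[OF Q] q_comm[OF Q] q_lzero[OF Q]
       q_inv[OF Q] q_sdistr[OF Q] q_vdistr[OF Q] q_smult[OF Q] q_one[OF Q]
  by (simp_all add: image_iff) (metis)+
qed

lemma transp_dmod: "dmod S (gtransp M e)"
proof -
  have D: "(\<forall>g\<in>S. \<forall>x\<in>gcarrier M. gact M g x \<in> gcarrier M) \<and>
    (\<forall>x\<in>gcarrier M. gact M 0 x = x) \<and>
    (\<forall>g\<in>S. \<forall>h\<in>S. \<forall>x\<in>gcarrier M. gact M (g + h) x = gact M g (gact M h x)) \<and>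
    (\<forall>g\<in>S. \<forall>x\<in>gcarrier M. \<forall>y\<in>gcarrier M.
        gact M g (gadd M x y) = gadd M (gact M g x) (gact M g y)) \<and>
    (\<forall>g\<in>S. \<forall>a. \<forall>x\<in>gcarrier M. gact M g (gsmul M a x) = gsmul M a (gact M g x)) \<and>
    (\<forall>x\<in>gcarrier M. openin (top_of_set S) {g\<in>S. gact M g x = x})"
    using DM unfolding dmod_def by blast
  have stab: "{g\<in>S. e (gact M g x) = e x} = {g\<in>S. gact M g x = x}" if "x \<in> gcarrier M" for x
    using that dm_act inj by (auto simp: inj_on_eq_iff)
  show ?thesis
    unfolding dmod_def
    apply (intro conjI transp_qvs)
    unfolding transp_simps ball_img
    using D q_add[OF QM] q_smul[OF QM] stab by (simp_all add: image_iff) (blast intro: dm_act)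
qed

lemma transp_hom: "dhom S M (gtransp M e) e"
  unfolding dhom_def transp_simps using q_add[OF QM] q_smul[OF QM] dm_act by simp

lemma transp_hom_inv: "dhom S (gtransp M e) M (inv_into (gcarrier M) e)"
  unfolding dhom_def transp_simps ball_img using q_add[OF QM] q_smul[OF QM] dm_act by simp

end

lemma dhom_comp: "dhom S A B f \<Longrightarrow> dhom S B C g \<Longrightarrow> dhom S A C (g \<circ> f)"
  unfolding dhom_def by simp


lemma transl_cont:
  assumes "tdlc_group TYPE('g::{group_add,t2_space})"
  shows "continuous_on UNIV (\<lambda>g::'g. a + g)"
proof -
  have c: "continuous_on UNIV (\<lambda>p :: 'g \<times> 'g. fst p + snd p)"
    using assms unfolding tdlc_group_def by blast
  have "continuous_on UNIV (\<lambda>g::'g. (a, g))" by (intro continuous_intros)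
  from continuous_on_compose2[OF c this] show ?thesis by simp
qed

lemma fs_neg: "x \<in> fs A \<Longrightarrow> (\<lambda>w. - x w) \<in> fs A"
  using fs_smul[of x A "-1"] by simp

lemma qvs_permmod: "qvs (permmod \<Omega> \<alpha>)"
  unfolding qvs_def permmod_simps
  apply (intro conjI ballI allI)
  apply (simp_all add: fs_add fs_smul)
  apply (simp_all add: fun_eq_iff algebra_simps)
  apply (rule_tac x="\<lambda>w. - x w" in bexI)
  apply (simp_all add: fs_neg)
  done

lemma dmod_permmod:
  assumes G: "tdlc_group TYPE('g::{group_add,t2_space})" and P: "proper_gset (UNIV::'g set) \<Omega> \<alpha>"
  shows "dmod (UNIV::'g set) (permmod \<Omega> \<alpha>)"
proof -
  have A: "actok (UNIV::'g set) \<Omega> \<alpha>" using actok_proper[OF P] by simp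
  have ac: "\<forall>g h. \<forall>w\<in>\<Omega>. \<alpha> (g + h) w = \<alpha> g (\<alpha> h w)" "\<forall>w\<in>\<Omega>. \<alpha> 0 w = w"
    "\<forall>g. \<forall>w\<in>\<Omega>. \<alpha> g w \<in> \<Omega>"
    using P unfolding proper_gset_def by auto
  have stab_open: "\<forall>w\<in>\<Omega>. open {g. \<alpha> g w = w}"
    using P unfolding proper_gset_def by auto
  have act1: "pact \<Omega> \<alpha> 0 x = x" if "x \<in> fs \<Omega>" for x
    using that ac by (auto simp: pact_def fun_eq_iff fs_iff)
  have act2: "pact \<Omega> \<alpha> (g + h) x = pact \<Omega> \<alpha> g (pact \<Omega> \<alpha> h x)" for g h and x :: "_ \<Rightarrow> rat"
  proof -
    have "\<alpha> (- (g+h)) w = \<alpha> (-h) (\<alpha> (-g) w)" if "w \<in> \<Omega>" for w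
      by (simp only: minus_add) (use ac that in blast)
    thus ?thesis using ac by (auto simp: pact_def fun_eq_iff)
  qed
  have openstab: "open {g. pact \<Omega> \<alpha> g x = x}" if x: "x \<in> fs \<Omega>" for x
  proof -
    define U where "U = (\<Inter>w\<in>supp x. {g::'g. \<alpha> g w = w})"
    have Uo: "open U" unfolding U_def
      using x stab_open by (intro open_INT) (auto simp: fs_def)
    have Ustab: "pact \<Omega> \<alpha> k x = x" if k: "k \<in> U" for k
    proof -
      have kf: "\<alpha> k w = w" if "w \<in> supp x" for w using k that unfolding U_def by blast
      have kf': "\<alpha> (- k) w = w" if "w \<in> supp x" for w
        using kf[OF that] ak_inv1[OF A, of k w] x that by (auto simp: fs_def)
      show ?thesis unfolding pact_def fun_eq_iff
      proof (intro allI)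
        fix u show "(if u \<in> \<Omega> then x (\<alpha> (- k) u) else 0) = x u"
        proof (cases "u \<in> \<Omega>")
          case True
          show ?thesis
          proof (cases "u \<in> supp x")
            case True thus ?thesis using kf' \<open>u \<in> \<Omega>\<close> by simp
          next
            case False
            have "\<alpha> (- k) u \<notin> supp x"
            proof
              assume h: "\<alpha> (- k) u \<in> supp x"
              have "\<alpha> k (\<alpha> (- k) u) = u" using ak_inv2[OF A, of k u] True by simp
              hence "\<alpha> (- k) u = u" using kf[OF h] by simp
              thus False using h False by simp
            qed
            thus ?thesis using False True by (simp add: supp_def)
          qed
        next
          case False thus ?thesis using x by (auto simp: fs_iff)
        qed
      qed
    qed
    show ?thesis
    proof (subst open_subopen, intro ballI)
      fix g0 assume g0: "g0 \<in> {g. pact \<Omega> \<alpha> g x = x}"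
      let ?T = "(\<lambda>g. - g0 + g) -` U"
      have "open ?T" by (rule open_vimage[OF Uo transl_cont[OF G]])
      moreover have "g0 \<in> ?T"
      proof -
        have "0 \<in> U" unfolding U_def using x ac(2) by (auto simp: fs_def)
        thus ?thesis by simp
      qed
      moreover have "?T \<subseteq> {g. pact \<Omega> \<alpha> g x = x}"
      proof
        fix g assume "g \<in> ?T"
        hence h1: "pact \<Omega> \<alpha> (- g0 + g) x = x" using Ustab by simp
        have h2: "pact \<Omega> \<alpha> g0 x = x" using g0 by simp
        have "pact \<Omega> \<alpha> g x = pact \<Omega> \<alpha> g0 (pact \<Omega> \<alpha> (- g0 + g) x)"
          using act2[of g0 "- g0 + g" x] by simp
        thus "g \<in> {g. pact \<Omega> \<alpha> g x = x}" using h1 h2 by simp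
      qed
      ultimately show "\<exists>T. open T \<and> g0 \<in> T \<and> T \<subseteq> {g. pact \<Omega> \<alpha> g x = x}" by blast
    qed
  qed
  show ?thesis
    unfolding dmod_def permmod_simps
  proof (intro conjI ballI allI)
    show "qvs (permmod \<Omega> \<alpha>)" by (rule qvs_permmod)
  next
    fix g and x :: "_ \<Rightarrow> rat" assume "x \<in> fs \<Omega>" thus "pact \<Omega> \<alpha> g x \<in> fs \<Omega>" using fs_pact[OF A] by simp
  next
    fix x :: "_ \<Rightarrow> rat" assume "x \<in> fs \<Omega>" thus "pact \<Omega> \<alpha> 0 x = x" by (rule act1)
  next
    fix g h and x :: "_ \<Rightarrow> rat" show "pact \<Omega> \<alpha> (g + h) x = pact \<Omega> \<alpha> g (pact \<Omega> \<alpha> h x)" by (rule act2)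
  next
    fix g and x y :: "_ \<Rightarrow> rat"
    show "pact \<Omega> \<alpha> g (\<lambda>w. x w + y w) = (\<lambda>w. pact \<Omega> \<alpha> g x w + pact \<Omega> \<alpha> g y w)"
      by (simp add: pact_def fun_eq_iff)
  next
    fix g a and x :: "_ \<Rightarrow> rat"
    show "pact \<Omega> \<alpha> g (\<lambda>w. a * x w) = (\<lambda>w. a * pact \<Omega> \<alpha> g x w)"
      by (simp add: pact_def fun_eq_iff)
  next
    fix x :: "_ \<Rightarrow> rat" assume "x \<in> fs \<Omega>"
    thus "openin (top_of_set UNIV) {g \<in> UNIV. pact \<Omega> \<alpha> g x = x}"
      using openstab by simp
  qed
qed


lemma orbit_inj:
  fixes S :: "'g set" and \<alpha> :: "'g \<Rightarrow> 'w \<Rightarrow> 'w"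
  assumes FO: "finite_orbits S \<Omega> \<alpha>"
  shows "\<exists>j :: 'w \<Rightarrow> 'g \<times> nat. inj_on j \<Omega>"
proof -
  obtain F where F: "finite F" "F \<subseteq> \<Omega>" "\<Omega> = {\<alpha> g w | g w. g \<in> S \<and> w \<in> F}"
    using FO unfolding finite_orbits_def by blast
  obtain i :: "'w \<Rightarrow> nat" and n where i: "inj_on i F" using finite_imp_inj_to_nat_seg[OF F(1)] by blast
  define rep where "rep w = (SOME p. snd p \<in> F \<and> w = \<alpha> (fst p) (snd p))" for w
  have rep: "snd (rep w) \<in> F \<and> w = \<alpha> (fst (rep w)) (snd (rep w))" if wO: "w \<in> \<Omega>" for w
  proof -
    obtain g u where "u \<in> F" "w = \<alpha> g u" using wO F(3) by blast
    hence "\<exists>p. snd p \<in> F \<and> w = \<alpha> (fst p) (snd p)" by (intro exI[of _ "(g,u)"]) simp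
    thus ?thesis unfolding rep_def by (rule someI_ex)
  qed
  define j where "j w = (fst (rep w), i (snd (rep w)))" for w
  have "inj_on j \<Omega>"
  proof (rule inj_onI)
    fix w w' assume w: "w \<in> \<Omega>" "w' \<in> \<Omega>" and e: "j w = j w'"
    hence "fst (rep w) = fst (rep w')" "i (snd (rep w)) = i (snd (rep w'))" by (auto simp: j_def)
    moreover have "snd (rep w) = snd (rep w')" using i rep w calculation(2) by (meson inj_onD)
    ultimately show "w = w'" using rep w by metis
  qed
  thus ?thesis by blast
qed

lemma section_exists:
  fixes M :: "('g::{group_add,t2_space}, 'm) gmod" and \<Omega> :: "'w set"
  assumes G: "tdlc_group TYPE('g)" and DM: "dmod UNIV M" and PJ: "dproj UNIV M"
    and pres: "filling_pres UNIV \<Omega> \<alpha> M d"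
  shows "\<exists>s. dhom UNIV M (permmod \<Omega> \<alpha>) s \<and> (\<forall>m\<in>gcarrier M. d (s m) = m)"
proof -
  have P: "proper_gset UNIV \<Omega> \<alpha>" and FO: "finite_orbits UNIV \<Omega> \<alpha>"
    and dh: "dhom UNIV (permmod \<Omega> \<alpha>) M d" and dsurj: "d ` fs \<Omega> = gcarrier M"
    using pres unfolding filling_pres_def by auto
  obtain j :: "'w \<Rightarrow> 'g \<times> nat" where j: "inj_on j \<Omega>" using orbit_inj[OF FO] by blast
  define eP where "eP x = (\<lambda>p. if p \<in> j ` \<Omega> then x (inv_into \<Omega> j p) else (0::rat))" for x :: "'w \<Rightarrow> rat"
  have ePinj: "inj_on eP (fs \<Omega>)"
  proof (rule inj_onI)
    fix x y assume xy: "x \<in> fs \<Omega>" "y \<in> fs \<Omega>" and e: "eP x = eP y"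
    show "x = y"
    proof
      fix w show "x w = y w"
      proof (cases "w \<in> \<Omega>")
        case True
        have "eP x (j w) = eP y (j w)" using e by simp
        thus ?thesis using True j by (simp add: eP_def)
      next
        case False thus ?thesis using xy unfolding fs_iff by metis
      qed
    qed
  qed
  define P where "P = permmod \<Omega> \<alpha>"
  have DP: "dmod UNIV P" unfolding P_def by (rule dmod_permmod[OF G P])
  define ivd where "ivd = inv_into (fs \<Omega>) d"
  define eM where "eM = eP \<circ> ivd"
  have ivd_in: "ivd m \<in> fs \<Omega>" if "m \<in> gcarrier M" for m
    unfolding ivd_def using that dsurj by (metis inv_into_into)
  have ivd_inj: "inj_on ivd (gcarrier M)" unfolding ivd_def using dsurj by (simp add: inj_on_inv_into)
  have eMinj: "inj_on eM (gcarrier M)"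
    unfolding eM_def using ivd_inj ePinj ivd_in by (auto intro!: comp_inj_on inj_on_subset[OF ePinj])
  have PC: "gcarrier P = fs \<Omega>" by (simp add: P_def)
  define A where "A = gtransp P eP"
  define B where "B = gtransp M eM"
  have DA: "dmod UNIV A" unfolding A_def by (rule transp_dmod[OF DP]) (simp add: PC ePinj)
  have DB: "dmod UNIV B" unfolding B_def by (rule transp_dmod[OF DM eMinj])
  define p where "p = eM \<circ> (d \<circ> inv_into (gcarrier P) eP)"
  have hf: "dhom UNIV M B eM" unfolding B_def by (rule transp_hom[OF DM eMinj])
  have h1: "dhom UNIV A P (inv_into (gcarrier P) eP)" unfolding A_def
    by (rule transp_hom_inv[OF DP]) (simp add: PC ePinj)
  have hp: "dhom UNIV A B p" unfolding p_def
    by (rule dhom_comp[OF dhom_comp[OF h1 dh[folded P_def]] hf])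
  have psurj: "p ` gcarrier A = gcarrier B"
  proof -
    have "p ` gcarrier A = (\<lambda>x. eM (d x)) ` fs \<Omega>"
      unfolding p_def A_def transp_simps PC image_image using ePinj by (simp add: inv_into_f_f)
    also have "\<dots> = eM ` gcarrier M" using dsurj by (simp add: image_image[symmetric])
    finally show ?thesis by (simp add: B_def transp_simps)
  qed
  obtain f' where f': "dhom UNIV M A f'" "\<forall>x\<in>gcarrier M. p (f' x) = eM x"
    using PJ[unfolded dproj_def, rule_format, of A B p eM] DA DB hp psurj hf by blast
  define s where "s = inv_into (gcarrier P) eP \<circ> f'"
  have hs: "dhom UNIV M P s" unfolding s_def
    by (rule dhom_comp[OF f'(1) h1])
  have "d (s m) = m" if m: "m \<in> gcarrier M" for m
  proof -
    have sm: "s m \<in> fs \<Omega>" using hs m unfolding dhom_def PC by auto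
    have dsm: "d (s m) \<in> gcarrier M" using dh sm unfolding dhom_def by auto
    have "eM (d (s m)) = eM m" using f'(2) m unfolding p_def s_def by simp
    thus ?thesis using eMinj dsm m by (auto dest: inj_onD)
  qed
  thus ?thesis using hs unfolding P_def by blast
qed


lemma dsub_simps:
  assumes "dsubmod S M W"
  shows "W \<subseteq> gcarrier M" "gzero M \<in> W" "\<And>x y. x \<in> W \<Longrightarrow> y \<in> W \<Longrightarrow> gadd M x y \<in> W"
    "\<And>x a. x \<in> W \<Longrightarrow> gsmul M a x \<in> W" "\<And>g x. g \<in> S \<Longrightarrow> x \<in> W \<Longrightarrow> gact M g x \<in> W"
  using assms unfolding dsubmod_def by blast+

lemma proj_exists:
  assumes Q: "qvs M" and N: "dsubmod H M N" and K: "dsubmod H M K"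
    and NK: "N \<inter> K = {gzero M}" and span: "\<forall>x\<in>gcarrier M. \<exists>a\<in>N. \<exists>b\<in>K. x = gadd M a b"
    and actadd: "\<forall>g\<in>H. \<forall>x\<in>gcarrier M. \<forall>y\<in>gcarrier M. gact M g (gadd M x y) = gadd M (gact M g x) (gact M g y)"
  shows "\<exists>\<pi>. (\<forall>m\<in>gcarrier M. \<pi> m \<in> N) \<and> (\<forall>n\<in>N. \<pi> n = n) \<and>
     (\<forall>x\<in>gcarrier M. \<forall>y\<in>gcarrier M. \<pi> (gadd M x y) = gadd M (\<pi> x) (\<pi> y)) \<and>
     (\<forall>c. \<forall>x\<in>gcarrier M. \<pi> (gsmul M c x) = gsmul M c (\<pi> x)) \<and>
     (\<forall>h\<in>H. \<forall>x\<in>gcarrier M. \<pi> (gact M h x) = gact M h (\<pi> x))"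
proof -
  note NS = dsub_simps[OF N] and KS = dsub_simps[OF K]
  have NC: "x \<in> N \<Longrightarrow> x \<in> gcarrier M" for x using NS(1) by blast
  have KC: "x \<in> K \<Longrightarrow> x \<in> gcarrier M" for x using KS(1) by blast
  have uniq: "a = a'" if a: "a \<in> N" "a' \<in> N" "b \<in> K" "b' \<in> K" "gadd M a b = gadd M a' b'" for a a' b b'
  proof -
    have C: "a \<in> gcarrier M" "a' \<in> gcarrier M" "b \<in> gcarrier M" "b' \<in> gcarrier M" using a NC KC by auto
    define c where "c = gadd M a (gsmul M (-1) a')"
    define c' where "c' = gadd M b' (gsmul M (-1) b)"
    have cN: "c \<in> N" unfolding c_def using a NS(3,4) by simp
    have cK: "c' \<in> K" unfolding c'_def using a KS(3,4) by simp
    have cC: "c \<in> gcarrier M" "c' \<in> gcarrier M" using cN cK NC KC by auto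
    have e1: "gadd M c (gadd M a' b) = gadd M a b"
    proof -
      have "gadd M c (gadd M a' b) = gadd M a (gadd M (gsmul M (-1) a') (gadd M a' b))"
        unfolding c_def using C q_assoc[OF Q] q_smul[OF Q] q_add[OF Q] by simp
      also have "\<dots> = gadd M a (gadd M (gadd M (gsmul M (-1) a') a') b)"
        using C q_assoc[OF Q] q_smul[OF Q] by simp
      also have "gadd M (gsmul M (-1) a') a' = gzero M"
        using C q_neg[OF Q, of a'] q_comm[OF Q, of a' "gsmul M (-1) a'"] q_smul[OF Q, of a' "-1"] by simp
      finally show ?thesis using C Q by simp
    qed
    have e2: "gadd M c' (gadd M a' b) = gadd M a' b'"
    proof -
      have "gadd M c' (gadd M a' b) = gadd M b' (gadd M (gsmul M (-1) b) (gadd M a' b))"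
        unfolding c'_def using C q_assoc[OF Q] q_smul[OF Q] q_add[OF Q] by simp
      also have "\<dots> = gadd M b' (gadd M a' (gadd M (gsmul M (-1) b) b))"
        using C q_lcomm[OF Q] q_smul[OF Q] by simp
      also have "gadd M (gsmul M (-1) b) b = gzero M"
        using C q_neg[OF Q, of b] q_comm[OF Q, of b "gsmul M (-1) b"] q_smul[OF Q, of b "-1"] by simp
      finally show ?thesis using C Q q_comm[OF Q, of a' b'] by simp
    qed
    have "c = c'" using q_cancel[OF Q cC, of "gadd M a' b"] e1 e2 a(5) C Q by simp
    hence "c = gzero M" using cN cK NK by blast
    hence "gadd M c a' = a'" using C Q by simp
    moreover have "gadd M c a' = a" unfolding c_def using q_neg_cancel[OF Q] C by simp
    ultimately show ?thesis by simp
  qed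
  define \<pi> where "\<pi> m = (THE a. a \<in> N \<and> (\<exists>b\<in>K. m = gadd M a b))" for m
  have pi_eq: "\<pi> m = a" if "a \<in> N" "b \<in> K" "m = gadd M a b" for m a b
    unfolding \<pi>_def
  proof (rule the_equality)
    show "a \<in> N \<and> (\<exists>b\<in>K. m = gadd M a b)" using that by blast
  next
    fix a' assume h: "a' \<in> N \<and> (\<exists>b\<in>K. m = gadd M a' b)"
    then obtain b' where b': "b' \<in> K" "m = gadd M a' b'" by blast
    show "a' = a" by (rule uniq[of a' a b' b]) (use h b' that in auto)
  qed
  have pi_N: "\<pi> m \<in> N" if mC: "m \<in> gcarrier M" for m
  proof -
    obtain a b where ab: "a \<in> N" "b \<in> K" "m = gadd M a b" using span[rule_format, OF mC] by auto
    thus ?thesis using pi_eq[OF ab] by simp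
  qed
  have pi_id: "\<pi> n = n" if "n \<in> N" for n
    using pi_eq[OF that KS(2)] that NC Q by simp
  have pi_add: "\<pi> (gadd M x y) = gadd M (\<pi> x) (\<pi> y)" if xyC: "x \<in> gcarrier M" "y \<in> gcarrier M" for x y
  proof -
    obtain a b a' b' where ab: "a \<in> N" "b \<in> K" "x = gadd M a b" "a' \<in> N" "b' \<in> K" "y = gadd M a' b'"
      using span[rule_format, OF xyC(1)] span[rule_format, OF xyC(2)] by auto
    have C: "a \<in> gcarrier M" "a' \<in> gcarrier M" "b \<in> gcarrier M" "b' \<in> gcarrier M" using ab NC KC by auto
    have "gadd M x y = gadd M a (gadd M b (gadd M a' b'))" using ab C q_assoc[OF Q] q_add[OF Q] by simp
    also have "\<dots> = gadd M a (gadd M a' (gadd M b b'))" using C q_lcomm[OF Q] by simp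
    also have "\<dots> = gadd M (gadd M a a') (gadd M b b')" using C q_assoc[OF Q] q_add[OF Q] by simp
    finally have "\<pi> (gadd M x y) = gadd M a a'"
      by (intro pi_eq[of "gadd M a a'" "gadd M b b'"]) (use ab NS(3) KS(3) in auto)
    moreover have "\<pi> x = a" "\<pi> y = a'" using pi_eq[of a b x] pi_eq[of a' b' y] ab by auto
    ultimately show ?thesis by simp
  qed
  have pi_smul: "\<pi> (gsmul M c x) = gsmul M c (\<pi> x)" if xC: "x \<in> gcarrier M" for x c
  proof -
    obtain a b where ab: "a \<in> N" "b \<in> K" "x = gadd M a b" using span[rule_format, OF xC] by auto
    have "gsmul M c x = gadd M (gsmul M c a) (gsmul M c b)" using ab NC KC q_vdistr[OF Q] by simp
    hence "\<pi> (gsmul M c x) = gsmul M c a"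
      by (intro pi_eq[of "gsmul M c a" "gsmul M c b"]) (use ab NS(4) KS(4) in auto)
    thus ?thesis using pi_eq[of a b x] ab by simp
  qed
  have pi_act: "\<pi> (gact M h x) = gact M h (\<pi> x)" if hx: "h \<in> H" "x \<in> gcarrier M" for x h
  proof -
    obtain a b where ab: "a \<in> N" "b \<in> K" "x = gadd M a b" using span[rule_format, OF hx(2)] by auto
    have "gact M h x = gadd M (gact M h a) (gact M h b)" using ab NC KC actadd hx by simp
    hence "\<pi> (gact M h x) = gact M h a"
      by (intro pi_eq[of "gact M h a" "gact M h b"]) (use ab hx NS(5) KS(5) in auto)
    thus ?thesis using pi_eq[of a b x] ab by simp
  qed
  show ?thesis by (rule exI[of _ \<pi>]) (use pi_N pi_id pi_add pi_smul pi_act in blast)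
qed


lemma dhom_perm_lin: "dhom S (permmod \<Omega> \<alpha>) Q f \<Longrightarrow> lin \<Omega> Q f"
  unfolding dhom_def lin_def by simp

lemma dhom_perm_act: "dhom S (permmod \<Omega> \<alpha>) Q f \<Longrightarrow> g \<in> S \<Longrightarrow> x \<in> fs \<Omega> \<Longrightarrow>
    f (pact \<Omega> \<alpha> g x) = gact Q g (f x)"
  unfolding dhom_def by simp

lemma lin_mono: "lin A Q T \<Longrightarrow> gcarrier Q \<subseteq> gcarrier Q' \<Longrightarrow> gadd Q' = gadd Q \<Longrightarrow> gsmul Q' = gsmul Q \<Longrightarrow> lin A Q' T"
  unfolding lin_def by auto

lemma lin_sub: "lin A Q T \<Longrightarrow> B \<subseteq> A \<Longrightarrow> lin B Q T"
  unfolding lin_def using fs_mono by blast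

lemma inf_compare:
  fixes X Y :: "real set"
  assumes X: "X \<noteq> {}" and XY: "\<forall>a\<in>X. \<exists>b\<in>Y. b \<le> C * a" and Y0: "\<forall>b\<in>Y. 0 \<le> b" and C: "C > 0"
  shows "Inf Y \<le> C * Inf X"
proof -
  have bY: "bdd_below Y" using Y0 by (auto simp: bdd_below_def)
  have "Inf Y / C \<le> a" if a: "a \<in> X" for a
  proof -
    obtain b where b: "b \<in> Y" "b \<le> C * a" using XY a by blast
    have "Inf Y \<le> b" by (rule cInf_lower[OF b(1) bY])
    hence "Inf Y \<le> C * a" using b by simp
    thus ?thesis using C by (simp add: divide_le_eq mult.commute)
  qed
  hence "Inf Y / C \<le> Inf X" by (intro cInf_greatest X) auto
  thus ?thesis using C by (simp add: divide_le_eq mult.commute)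
qed


theorem proposition4p5:
  fixes M :: "('g::{group_add, t2_space}, 'm) gmod"
    and H :: "'g set"
    and N :: "'m set"
    and \<Omega> :: "'w set" and \<alpha> :: "'g \<Rightarrow> 'w \<Rightarrow> 'w" and d :: "('w \<Rightarrow> rat) \<Rightarrow> 'm"
    and \<Omega>' :: "'v set" and \<beta> :: "'g \<Rightarrow> 'v \<Rightarrow> 'v" and d' :: "('v \<Rightarrow> rat) \<Rightarrow> 'm"
  assumes G: "tdlc_group TYPE('g)"
    and H: "closed_subgroup H"
    and M: "dmod UNIV M" "dfg UNIV M" "dproj UNIV M"
    and presM: "filling_pres UNIV \<Omega> \<alpha> M d"
    and N_sub: "dsubmod H M N"
    and N_summand: "\<exists>K. dsubmod H M K \<and> N \<inter> K = {gzero M} \<and>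
                        (\<forall>x\<in>gcarrier M. \<exists>a\<in>N. \<exists>b\<in>K. x = gadd M a b)"
    and N_fg: "dfg H (M\<lparr>gcarrier := N\<rparr>)"
    and presN: "filling_pres H \<Omega>' \<beta> (M\<lparr>gcarrier := N\<rparr>) d'"
  shows "\<exists>C>0. \<forall>n\<in>N.
           filling_norm \<Omega>' \<beta> d' n \<le> C * filling_norm \<Omega> \<alpha> d n \<and>
           filling_norm \<Omega> \<alpha> d n \<le> C * filling_norm \<Omega>' \<beta> d' n"
proof -
  have QM: "qvs M" using M(1) by (rule dmod_qvs)
  have DMf: "(\<forall>g. \<forall>x\<in>gcarrier M. gact M g x \<in> gcarrier M) \<and>
    (\<forall>g h. \<forall>x\<in>gcarrier M. \<forall>y\<in>gcarrier M.
        gact M g (gadd M x y) = gadd M (gact M g x) (gact M g y))"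
    using M(1) unfolding dmod_def by simp
  have P: "proper_gset UNIV \<Omega> \<alpha>" and FO: "finite_orbits UNIV \<Omega> \<alpha>"
    and dh: "dhom UNIV (permmod \<Omega> \<alpha>) M d" and dsurj: "d ` fs \<Omega> = gcarrier M"
    using presM unfolding filling_pres_def by auto
  have P': "proper_gset H \<Omega>' \<beta>" and FO': "finite_orbits H \<Omega>' \<beta>"
    and dh': "dhom H (permmod \<Omega>' \<beta>) (M\<lparr>gcarrier := N\<rparr>) d'" and d'surj: "d' ` fs \<Omega>' = N"
    using presN unfolding filling_pres_def by auto
  have H0: "0 \<in> H" and Hsub: "\<And>x y. x \<in> H \<Longrightarrow> y \<in> H \<Longrightarrow> x - y \<in> H"
    using H unfolding closed_subgroup_def by auto
  have Hneg: "- h \<in> H" if "h \<in> H" for h using Hsub[OF H0 that] by simp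
  have Hadd: "h + k \<in> H" if "h \<in> H" "k \<in> H" for h k using Hsub[OF that(1) Hneg[OF that(2)]] by simp
  have AG: "actok UNIV \<Omega> \<alpha>" by (rule actok_proper[OF P]) simp
  have AH: "actok H \<Omega>' \<beta>" by (rule actok_proper[OF P']) (use Hneg in blast)
  have NC: "N \<subseteq> gcarrier M" using N_sub unfolding dsubmod_def by blast
  have lin_d: "lin \<Omega> M d" by (rule dhom_perm_lin[OF dh])
  have lin_d': "lin \<Omega>' M d'" by (rule lin_mono[OF dhom_perm_lin[OF dh']]) (use NC in auto)
  have d_act: "d (pact \<Omega> \<alpha> g x) = gact M g (d x)" if "x \<in> fs \<Omega>" for g x
    using dhom_perm_act[OF dh _ that] by simp
  have d'_act: "d' (pact \<Omega>' \<beta> h y) = gact M h (d' y)" if "h \<in> H" "y \<in> fs \<Omega>'" for h y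
    using dhom_perm_act[OF dh' that] by simp
  have d_in: "d x \<in> gcarrier M" if "x \<in> fs \<Omega>" for x using lin_in[OF lin_d that] .
  have d'_in: "d' y \<in> N" if "y \<in> fs \<Omega>'" for y using d'surj that by blast

  obtain F' where F': "finite F'" "F' \<subseteq> \<Omega>'" "\<Omega>' = {\<beta> h v | h v. h \<in> H \<and> v \<in> F'}"
    using FO' unfolding finite_orbits_def by blast
  have "\<forall>v\<in>F'. \<exists>x. x \<in> fs \<Omega> \<and> d x = d' (dl v)"
  proof
    fix v assume "v \<in> F'"
    hence "d' (dl v) \<in> gcarrier M" using d'_in F'(2) NC fs_dl by blast
    thus "\<exists>x. x \<in> fs \<Omega> \<and> d x = d' (dl v)" using dsurj by (metis imageE)
  qed
  then obtain X where X: "\<And>v. v \<in> F' \<Longrightarrow> X v \<in> fs \<Omega> \<and> d (X v) = d' (dl v)" by metis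
  define CA where "CA = (\<Sum>v\<in>F'. l1norm (X v))"
  have CA0: "0 \<le> CA" unfolding CA_def by (simp add: sum_nonneg)
  have bndA: "\<forall>v\<in>\<Omega>'. \<exists>x\<in>fs \<Omega>. d x = d' (dl v) \<and> l1norm x \<le> CA"
  proof
    fix v assume "v \<in> \<Omega>'"
    then obtain h v0 where hv: "h \<in> H" "v0 \<in> F'" "v = \<beta> h v0" using F'(3) by blast
    have X0: "X v0 \<in> fs \<Omega>" "d (X v0) = d' (dl v0)" using X hv(2) by auto
    have "dl v = pact \<Omega>' \<beta> h (dl v0)" using pact_dl[OF AH hv(1)] hv F'(2) by auto
    moreover have v0O: "v0 \<in> \<Omega>'" using hv F'(2) by auto
    ultimately have "d' (dl v) = gact M h (d' (dl v0))" using d'_act[OF hv(1) fs_dl[OF v0O]] by simp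
    also have "\<dots> = d (pact \<Omega> \<alpha> h (X v0))" using d_act X0 by simp
    finally have e: "d (pact \<Omega> \<alpha> h (X v0)) = d' (dl v)" ..
    have l: "l1norm (pact \<Omega> \<alpha> h (X v0)) \<le> CA"
      using l1_pact[OF AG _ X0(1)] member_le_sum[of v0 F' "\<lambda>v. l1norm (X v)"] hv(2) F'(1)
      unfolding CA_def by simp
    show "\<exists>x\<in>fs \<Omega>. d x = d' (dl v) \<and> l1norm x \<le> CA"
      using e l fs_pact[OF AG _ X0(1)] by blast
  qed
  have dirA: "\<exists>x\<in>fs \<Omega>. d x = d' y \<and> l1norm x \<le> CA * l1norm y" if "y \<in> fs \<Omega>'" for y
    by (rule extend_bound[OF QM lin_d' lin_d bndA CA0 that])

  obtain s where s: "dhom UNIV M (permmod \<Omega> \<alpha>) s" "\<forall>m\<in>gcarrier M. d (s m) = m"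
    using section_exists[OF G M(1) M(3) presM] by blast
  have s_in: "s m \<in> fs \<Omega>" if "m \<in> gcarrier M" for m using s(1) that unfolding dhom_def by simp
  have s_add: "s (gadd M a b) = (\<lambda>w. s a w + s b w)" if "a \<in> gcarrier M" "b \<in> gcarrier M" for a b
    using s(1) that unfolding dhom_def by simp
  have s_smul: "s (gsmul M c a) = (\<lambda>w. c * s a w)" if "a \<in> gcarrier M" for a c
    using s(1) that unfolding dhom_def by simp
  have s_act: "s (gact M g a) = pact \<Omega> \<alpha> g (s a)" if "a \<in> gcarrier M" for a g
    using s(1) that unfolding dhom_def by simp
  have s_zero: "s (gzero M) = (\<lambda>w. 0)"
    using s_smul[of "gzero M" 0] q_zero[OF QM] q_smul0[OF QM, of "gzero M"] by simp
  obtain FN where FN: "finite FN" "FN \<subseteq> N"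
      "N = \<Inter>{W. dsubmod H (M\<lparr>gcarrier := N\<rparr>) W \<and> FN \<subseteq> W}"
    using N_fg unfolding dfg_def by auto
  define S0 where "S0 = (\<Union>f\<in>FN. supp (s f))"
  have sFN: "s f \<in> fs \<Omega>" if "f \<in> FN" for f using that FN(2) NC s_in by blast
  have S0f: "finite S0" unfolding S0_def using FN(1) sFN by (auto simp: fs_def)
  have S0O: "S0 \<subseteq> \<Omega>" unfolding S0_def using sFN by (auto simp: fs_def)
  define \<Omega>0 where "\<Omega>0 = {\<alpha> h u | h u. h \<in> H \<and> u \<in> S0}"
  have O0O: "\<Omega>0 \<subseteq> \<Omega>" unfolding \<Omega>0_def using S0O ak_in[OF AG] by auto
  define W where "W = {m\<in>N. supp (s m) \<subseteq> \<Omega>0}"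
  have NW: "N \<subseteq> W"
  proof -
    have "dsubmod H (M\<lparr>gcarrier := N\<rparr>) W \<and> FN \<subseteq> W"
    proof
      show "dsubmod H (M\<lparr>gcarrier := N\<rparr>) W"
        unfolding dsubmod_def
      proof (intro conjI ballI allI)
        show "W \<subseteq> gcarrier (M\<lparr>gcarrier := N\<rparr>)" unfolding W_def by auto
        show "gzero (M\<lparr>gcarrier := N\<rparr>) \<in> W"
          unfolding W_def using dsub_simps(2)[OF N_sub] s_zero by (simp add: supp_def)
      next
        fix x y assume xy: "x \<in> W" "y \<in> W"
        hence C: "x \<in> gcarrier M" "y \<in> gcarrier M" unfolding W_def using NC by auto
        have "supp (s (gadd M x y)) \<subseteq> supp (s x) \<union> supp (s y)"
          using s_add[OF C] by (auto simp: supp_def)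
        thus "gadd (M\<lparr>gcarrier := N\<rparr>) x y \<in> W"
          using xy dsub_simps(3)[OF N_sub] unfolding W_def by auto
      next
        fix a x assume x: "x \<in> W"
        hence C: "x \<in> gcarrier M" unfolding W_def using NC by auto
        have "supp (s (gsmul M a x)) \<subseteq> supp (s x)"
          using s_smul[OF C] by (auto simp: supp_def)
        thus "gsmul (M\<lparr>gcarrier := N\<rparr>) a x \<in> W"
          using x dsub_simps(4)[OF N_sub] unfolding W_def by auto
      next
        fix g x assume g: "g \<in> H" and x: "x \<in> W"
        hence C: "x \<in> gcarrier M" unfolding W_def using NC by auto
        have "supp (s (gact M g x)) = \<alpha> g ` supp (s x)"
          using s_act[OF C] supp_pact[OF AG _ s_in[OF C]] by simp
        also have "\<dots> \<subseteq> \<Omega>0"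
        proof
          fix u assume "u \<in> \<alpha> g ` supp (s x)"
          then obtain w where w: "w \<in> supp (s x)" "u = \<alpha> g w" by blast
          then obtain h u0 where hu: "h \<in> H" "u0 \<in> S0" "w = \<alpha> h u0" using x unfolding W_def \<Omega>0_def by blast
          have "u = \<alpha> (g + h) u0" using hu w AG S0O unfolding actok_def by auto
          thus "u \<in> \<Omega>0" unfolding \<Omega>0_def using Hadd[OF g hu(1)] hu(2) by blast
        qed
        finally show "gact (M\<lparr>gcarrier := N\<rparr>) g x \<in> W"
          using x g dsub_simps(5)[OF N_sub] unfolding W_def by auto
      qed
    next
      show "FN \<subseteq> W"
      proof
        fix f assume f: "f \<in> FN"
        have "supp (s f) \<subseteq> \<Omega>0"
        proof
          fix u assume "u \<in> supp (s f)"
          hence "u \<in> S0" "u \<in> \<Omega>" unfolding S0_def using f S0O S0_def by auto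
          hence "u = \<alpha> 0 u" "u \<in> S0" using AG unfolding actok_def by auto
          thus "u \<in> \<Omega>0" unfolding \<Omega>0_def using H0 by blast
        qed
        thus "f \<in> W" using f FN(2) unfolding W_def by auto
      qed
    qed
    thus ?thesis using FN(3) by blast
  qed
  from N_summand obtain K where K0: "dsubmod H M K \<and> N \<inter> K = {gzero M} \<and>
        (\<forall>x\<in>gcarrier M. \<exists>a\<in>N. \<exists>b\<in>K. x = gadd M a b)" ..
  note K = K0[THEN conjunct1] K0[THEN conjunct2, THEN conjunct1] K0[THEN conjunct2, THEN conjunct2]
  have actadd: "\<forall>g\<in>H. \<forall>x\<in>gcarrier M. \<forall>y\<in>gcarrier M. gact M g (gadd M x y) = gadd M (gact M g x) (gact M g y)"
    using DMf by simp
  from proj_exists[OF QM N_sub K(1) K(2) K(3) actadd] obtain \<pi> where pi0: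
     "(\<forall>m\<in>gcarrier M. \<pi> m \<in> N) \<and> (\<forall>n\<in>N. \<pi> n = n) \<and>
     (\<forall>x\<in>gcarrier M. \<forall>y\<in>gcarrier M. \<pi> (gadd M x y) = gadd M (\<pi> x) (\<pi> y)) \<and>
     (\<forall>c. \<forall>x\<in>gcarrier M. \<pi> (gsmul M c x) = gsmul M c (\<pi> x)) \<and>
     (\<forall>h\<in>H. \<forall>x\<in>gcarrier M. \<pi> (gact M h x) = gact M h (\<pi> x))" ..
  note pi = pi0[THEN conjunct1] pi0[THEN conjunct2, THEN conjunct1]
    pi0[THEN conjunct2, THEN conjunct2, THEN conjunct1]
    pi0[THEN conjunct2, THEN conjunct2, THEN conjunct2, THEN conjunct1]
    pi0[THEN conjunct2, THEN conjunct2, THEN conjunct2, THEN conjunct2]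
  define R where "R z = (\<lambda>u. if u \<in> \<Omega>0 then z u else (0::rat))" for z :: "'w \<Rightarrow> rat"
  have R_in: "R z \<in> fs \<Omega>0" if "z \<in> fs \<Omega>" for z
    unfolding R_def using fs_restr[OF that, of \<Omega>0] by (auto intro: fs_mono)
  have R_inO: "R z \<in> fs \<Omega>" if "z \<in> fs \<Omega>" for z using R_in[OF that] O0O by (rule fs_mono)
  define T2 where "T2 x = \<pi> (d x)" for x
  have lin_T2: "lin \<Omega> M T2"
    unfolding lin_def T2_def using lin_d pi NC
    by (auto simp: lin_in lin_add lin_smul)
  define T where "T x = T2 (R (s (d x)))" for x
  have lin_T: "lin \<Omega> M T"
    unfolding lin_def
  proof (intro conjI ballI allI)
    fix x assume "x \<in> fs \<Omega>" thus "T x \<in> gcarrier M"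
      unfolding T_def using lin_in[OF lin_T2] R_inO s_in d_in by simp
  next
    fix x y assume xy: "x \<in> fs \<Omega>" "y \<in> fs \<Omega>"
    have "R (s (d (\<lambda>w. x w + y w))) = (\<lambda>w. R (s (d x)) w + R (s (d y)) w)"
      using lin_add[OF lin_d xy] s_add d_in xy by (simp add: R_def fun_eq_iff)
    thus "T (\<lambda>w. x w + y w) = gadd M (T x) (T y)"
      unfolding T_def using lin_add[OF lin_T2] R_inO s_in d_in xy by simp
  next
    fix c x assume x: "x \<in> fs \<Omega>"
    have "R (s (d (\<lambda>w. c * x w))) = (\<lambda>w. c * R (s (d x)) w)"
      using lin_smul[OF lin_d x] s_smul d_in x by (simp add: R_def fun_eq_iff)
    thus "T (\<lambda>w. c * x w) = gsmul M c (T x)"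
      unfolding T_def using lin_smul[OF lin_T2] R_inO s_in d_in x by simp
  qed
  obtain F where F: "finite F" "F \<subseteq> \<Omega>" "\<Omega> = {\<alpha> g w | g w. g \<in> UNIV \<and> w \<in> F}"
    using FO unfolding finite_orbits_def by blast
  define C1 where "C1 = (\<Sum>w\<in>F. l1norm (s (d (dl w))))"
  have C10: "0 \<le> C1" unfolding C1_def by (simp add: sum_nonneg)
  have "\<forall>u\<in>S0. \<exists>y. y \<in> fs \<Omega>' \<and> d' y = T2 (dl u)"
  proof
    fix u assume "u \<in> S0"
    hence "T2 (dl u) \<in> N" unfolding T2_def using pi(1) d_in fs_dl S0O by blast
    thus "\<exists>y. y \<in> fs \<Omega>' \<and> d' y = T2 (dl u)" using d'surj by (metis imageE)
  qed
  then obtain Y where Y: "\<And>u. u \<in> S0 \<Longrightarrow> Y u \<in> fs \<Omega>' \<and> d' (Y u) = T2 (dl u)" by metis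
  define C2 where "C2 = (\<Sum>u\<in>S0. l1norm (Y u))"
  have C20: "0 \<le> C2" unfolding C2_def by (simp add: sum_nonneg)
  have bnd2: "\<forall>u\<in>\<Omega>0. \<exists>y\<in>fs \<Omega>'. d' y = T2 (dl u) \<and> l1norm y \<le> C2"
  proof
    fix u assume "u \<in> \<Omega>0"
    then obtain h u0 where hu: "h \<in> H" "u0 \<in> S0" "u = \<alpha> h u0" unfolding \<Omega>0_def by blast
    have Y0: "Y u0 \<in> fs \<Omega>'" "d' (Y u0) = T2 (dl u0)" using Y hu(2) by auto
    have u0O: "u0 \<in> \<Omega>" using hu S0O by auto
    have "dl u = pact \<Omega> \<alpha> h (dl u0)" using pact_dl[OF AG _ u0O] hu by simp
    hence "T2 (dl u) = \<pi> (gact M h (d (dl u0)))" unfolding T2_def using d_act fs_dl[OF u0O] by simp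
    also have "\<dots> = gact M h (T2 (dl u0))" unfolding T2_def using pi(5) hu(1) d_in fs_dl[OF u0O] by simp
    also have "\<dots> = d' (pact \<Omega>' \<beta> h (Y u0))" using d'_act[OF hu(1) Y0(1)] Y0(2) by simp
    finally have e: "d' (pact \<Omega>' \<beta> h (Y u0)) = T2 (dl u)" ..
    have l: "l1norm (pact \<Omega>' \<beta> h (Y u0)) \<le> C2"
      using l1_pact[OF AH hu(1) Y0(1)] member_le_sum[of u0 S0 "\<lambda>u. l1norm (Y u)"] hu(2) S0f
      unfolding C2_def by simp
    show "\<exists>y\<in>fs \<Omega>'. d' y = T2 (dl u) \<and> l1norm y \<le> C2"
      using e l fs_pact[OF AH hu(1) Y0(1)] by blast
  qed
  have bndB: "\<forall>w\<in>\<Omega>. \<exists>y\<in>fs \<Omega>'. d' y = T (dl w) \<and> l1norm y \<le> C1 * C2"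
  proof
    fix w assume "w \<in> \<Omega>"
    then obtain g w0 where gw: "w0 \<in> F" "w = \<alpha> g w0" using F(3) by blast
    have w0O: "w0 \<in> \<Omega>" using gw F(2) by auto
    have dlin: "d (dl w0) \<in> gcarrier M" using d_in fs_dl[OF w0O] .
    have "s (d (dl w)) = s (d (pact \<Omega> \<alpha> g (dl w0)))" using pact_dl[OF AG _ w0O] gw by simp
    also have "\<dots> = pact \<Omega> \<alpha> g (s (d (dl w0)))" using d_act fs_dl[OF w0O] s_act[OF dlin] by simp
    finally have sz: "s (d (dl w)) = pact \<Omega> \<alpha> g (s (d (dl w0)))" .
    have z0: "s (d (dl w0)) \<in> fs \<Omega>" using s_in[OF dlin] .
    define z where "z = s (d (dl w))"
    have zin: "z \<in> fs \<Omega>" unfolding z_def sz by (rule fs_pact[OF AG _ z0]) simp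
    have lz: "l1norm z \<le> C1"
      unfolding z_def sz using l1_pact[OF AG _ z0] member_le_sum[of w0 F "\<lambda>w. l1norm (s (d (dl w)))"] gw(1) F(1)
      unfolding C1_def by simp
    have lRz: "l1norm (R z) \<le> C1"
      using l1_restr[of z \<Omega>0] zin lz unfolding R_def by (auto simp: fs_def)
    obtain y where y: "y \<in> fs \<Omega>'" "d' y = T2 (R z)" "l1norm y \<le> C2 * l1norm (R z)"
      using extend_bound[OF QM lin_sub[OF lin_T2 O0O] lin_d' bnd2 C20 R_in[OF zin]] by blast
    have "l1norm y \<le> C2 * C1" using y(3) lRz C20 by (meson mult_left_mono order_trans)
    moreover have "d' y = T (dl w)" unfolding T_def using y(2) z_def by simp
    ultimately show "\<exists>y\<in>fs \<Omega>'. d' y = T (dl w) \<and> l1norm y \<le> C1 * C2"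
      using y(1) by (auto simp: mult.commute)
  qed
  have C120: "0 \<le> C1 * C2" using C10 C20 by simp
  have dirB: "\<exists>y\<in>fs \<Omega>'. d' y = n \<and> l1norm y \<le> (C1 * C2) * l1norm x"
    if x: "x \<in> fs \<Omega>" and n: "n \<in> N" "d x = n" for x n
  proof -
    obtain y where y: "y \<in> fs \<Omega>'" "d' y = T x" "l1norm y \<le> (C1 * C2) * l1norm x"
      using extend_bound[OF QM lin_T lin_d' bndB C120 x] by blast
    have nC: "n \<in> gcarrier M" using n NC by auto
    have "n \<in> W" using NW n by auto
    hence "R (s n) = s n" unfolding W_def R_def by (auto simp: supp_def fun_eq_iff)
    hence "T x = n" unfolding T_def T2_def using n s(2) nC pi(2) by simp
    thus ?thesis using y by auto
  qed

  define C where "C = max 1 (max CA (C1 * C2))"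
  have Cpos: "C > 0" unfolding C_def by simp
  have CA_le: "CA \<le> C" and CB_le: "C1 * C2 \<le> C" unfolding C_def by auto
  show ?thesis
  proof (intro exI[of _ C] conjI Cpos ballI)
    fix n assume n: "n \<in> N"
    have nC: "n \<in> gcarrier M" using n NC by auto
    let ?XM = "{l1norm x | x. x \<in> fs \<Omega> \<and> d x = n}"
    let ?XN = "{l1norm y | y. y \<in> fs \<Omega>' \<and> d' y = n}"
    have fnM: "filling_norm \<Omega> \<alpha> d n = Inf ?XM" by (simp only: filling_norm_def permmod_simps)
    have fnN: "filling_norm \<Omega>' \<beta> d' n = Inf ?XN" by (simp only: filling_norm_def permmod_simps)
    obtain x0 where x0: "x0 \<in> fs \<Omega>" "d x0 = n" using nC dsurj by (metis imageE)
    obtain y0 where y0: "y0 \<in> fs \<Omega>'" "d' y0 = n" using n d'surj by (metis imageE)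
    have neM: "?XM \<noteq> {}" using x0 by blast
    have neN: "?XN \<noteq> {}" using y0 by blast
    have "Inf ?XN \<le> C * Inf ?XM"
    proof (rule inf_compare[OF neM _ _ Cpos])
      show "\<forall>a\<in>?XM. \<exists>b\<in>?XN. b \<le> C * a"
      proof
        fix a assume "a \<in> ?XM"
        then obtain x where x: "x \<in> fs \<Omega>" "d x = n" "a = l1norm x" by blast
        obtain y where y: "y \<in> fs \<Omega>'" "d' y = n" "l1norm y \<le> (C1 * C2) * l1norm x"
          using dirB[OF x(1) n x(2)] by blast
        have "(C1 * C2) * l1norm x \<le> C * l1norm x" by (rule mult_right_mono[OF CB_le l1_nonneg])
        hence "l1norm y \<le> C * a" using y(3) x(3) by simp
        thus "\<exists>b\<in>?XN. b \<le> C * a" using y by blast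
      qed
    qed auto
    thus "filling_norm \<Omega>' \<beta> d' n \<le> C * filling_norm \<Omega> \<alpha> d n" using fnM fnN by simp
    have "Inf ?XM \<le> C * Inf ?XN"
    proof (rule inf_compare[OF neN _ _ Cpos])
      show "\<forall>a\<in>?XN. \<exists>b\<in>?XM. b \<le> C * a"
      proof
        fix a assume "a \<in> ?XN"
        then obtain y where y: "y \<in> fs \<Omega>'" "d' y = n" "a = l1norm y" by blast
        obtain x where x: "x \<in> fs \<Omega>" "d x = d' y" "l1norm x \<le> CA * l1norm y"
          using dirA[OF y(1)] by blast
        have "CA * l1norm y \<le> C * l1norm y" by (rule mult_right_mono[OF CA_le l1_nonneg])
        hence "l1norm x \<le> C * a" using x(3) y(3) by simp
        thus "\<exists>b\<in>?XM. b \<le> C * a" using x y by blast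
      qed
    qed auto
    thus "filling_norm \<Omega> \<alpha> d n \<le> C * filling_norm \<Omega>' \<beta> d' n" using fnM fnN by simp
  qed
qed


end
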